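(* For every $d\ge 2$, $\mu(\mathit{BF}(d))=2^{d+1}-2$.
   Context: Binary strings $c=c_0\cdots c_{d-1}$ have positions $0,\dots,d-1$ from the left; $c(i)$ is $c$ with bit $i$ complemented. $\mathit{BF}(d)$ has vertex set $\{[\ell,c]:\ell\in\{0,\dots,d\},\ c\in\{0,1\}^d\}$; for $\ell\in\{0,\dots,d-1\}$, $[\ell,c]$ is adjacent to $[\ell+1,c']$ iff $c'=c$ or $c'=c(\ell)$, and there are no other edges. For a connected graph $G$ and $X\subseteq V(G)$, two vertices $x,y$ are $X$-visible if some shortest $x,y$-path has no internal vertex in $X$; $X$ is a mutual-visibility set if every two vertices of $X$ are $X$-visible; $\mu(G)$ is the maximum size of a mutual-visibility set. *)

theory Defs
  imports Main
begin

definition is_walk :: "'a set \<Rightarrow> ('a \<Rightarrow> 'a \<Rightarrow> bool) \<Rightarrow> 'a list \<Rightarrow> bool" where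
  "is_walk V E xs \<longleftrightarrow> xs \<noteq> [] \<and> set xs \<subseteq> V \<and> (\<forall>i. Suc i < length xs \<longrightarrow> E (xs ! i) (xs ! Suc i))"

definition walk_betw :: "'a set \<Rightarrow> ('a \<Rightarrow> 'a \<Rightarrow> bool) \<Rightarrow> 'a \<Rightarrow> 'a \<Rightarrow> 'a list \<Rightarrow> bool" where
  "walk_betw V E x y xs \<longleftrightarrow> is_walk V E xs \<and> hd xs = x \<and> last xs = y"

text \<open>Graph distance (number of edges of a shortest walk; the graph is connected).\<close>
definition gdist :: "'a set \<Rightarrow> ('a \<Rightarrow> 'a \<Rightarrow> bool) \<Rightarrow> 'a \<Rightarrow> 'a \<Rightarrow> nat" where
  "gdist V E x y = (LEAST n. \<exists>xs. walk_betw V E x y xs \<and> length xs = Suc n)"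

definition shortest_path :: "'a set \<Rightarrow> ('a \<Rightarrow> 'a \<Rightarrow> bool) \<Rightarrow> 'a \<Rightarrow> 'a \<Rightarrow> 'a list \<Rightarrow> bool" where
  "shortest_path V E x y xs \<longleftrightarrow> walk_betw V E x y xs \<and> length xs = Suc (gdist V E x y)"

definition internal :: "'a list \<Rightarrow> 'a set" where
  "internal xs = set (butlast (tl xs))"

definition X_visible :: "'a set \<Rightarrow> ('a \<Rightarrow> 'a \<Rightarrow> bool) \<Rightarrow> 'a set \<Rightarrow> 'a \<Rightarrow> 'a \<Rightarrow> bool" where
  "X_visible V E X x y \<longleftrightarrow> (\<exists>xs. shortest_path V E x y xs \<and> internal xs \<inter> X = {})"

definition mutual_visibility_set :: "'a set \<Rightarrow> ('a \<Rightarrow> 'a \<Rightarrow> bool) \<Rightarrow> 'a set \<Rightarrow> bool" where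
  "mutual_visibility_set V E X \<longleftrightarrow> X \<subseteq> V \<and> (\<forall>x\<in>X. \<forall>y\<in>X. X_visible V E X x y)"

definition mu :: "'a set \<Rightarrow> ('a \<Rightarrow> 'a \<Rightarrow> bool) \<Rightarrow> nat" where
  "mu V E = Max {card X | X. mutual_visibility_set V E X}"

text \<open>Butterfly BF(d): vertices [l,c] with 0 \<le> l \<le> d and c a binary string of
  length d (bit list, position i = c ! i). c(i) = c[i := \<not> c!i].\<close>

definition bf_V :: "nat \<Rightarrow> (nat \<times> bool list) set" where
  "bf_V d = {(l, c). l \<le> d \<and> length c = d}"

definition flip :: "bool list \<Rightarrow> nat \<Rightarrow> bool list" where
  "flip c i = c[i := \<not> c ! i]"

definition bf_step :: "nat \<Rightarrow> nat \<times> bool list \<Rightarrow> nat \<times> bool list \<Rightarrow> bool" where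
  "bf_step d u v \<longleftrightarrow> u \<in> bf_V d \<and> v \<in> bf_V d \<and> fst u < d \<and> fst v = Suc (fst u) \<and>
     (snd v = snd u \<or> snd v = flip (snd u) (fst u))"

definition bf_E :: "nat \<Rightarrow> nat \<times> bool list \<Rightarrow> nat \<times> bool list \<Rightarrow> bool" where
  "bf_E d u v \<longleftrightarrow> bf_step d u v \<or> bf_step d v u"

end

theory Submission
  imports Defs
begin


lemma length_flip[simp]: "length (flip c i) = length c"
  by (simp add: flip_def)

lemma flip_flip[simp]: "i < length c \<Longrightarrow> flip (flip c i) i = c"
  by (simp add: flip_def)

lemma nth_flip: "b < length c \<Longrightarrow> flip c i ! b = (if b = i then \<not> c ! b else c ! b)"
  by (simp add: flip_def nth_list_update)

lemma flip_neq: "i < length c \<Longrightarrow> flip c i \<noteq> c"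
  by (metis flip_def nth_list_update_eq)

lemma flip_inj: "i < length c \<Longrightarrow> i < length c' \<Longrightarrow> flip c i = flip c' i \<longleftrightarrow> c = c'"
  by (metis flip_flip length_flip)

lemma bfE_sym: "bf_E d u v \<Longrightarrow> bf_E d v u"
  unfolding bf_E_def by auto

lemma bfE_V: "bf_E d u v \<Longrightarrow> u \<in> bf_V d \<and> v \<in> bf_V d"
  unfolding bf_E_def bf_step_def by auto

lemma bfE_level: "bf_E d u v \<Longrightarrow> fst v = Suc (fst u) \<or> fst u = Suc (fst v)"
  unfolding bf_E_def bf_step_def by auto

lemma bfE_up: "bf_E d u v \<Longrightarrow> fst v = Suc (fst u) \<Longrightarrow> snd v = snd u \<or> snd v = flip (snd u) (fst u)"
  unfolding bf_E_def bf_step_def by auto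

lemma bfE_intro: "u \<in> bf_V d \<Longrightarrow> v \<in> bf_V d \<Longrightarrow> fst v = Suc (fst u) \<Longrightarrow>
   (snd v = snd u \<or> snd v = flip (snd u) (fst u)) \<Longrightarrow> bf_E d u v"
  unfolding bf_E_def bf_step_def bf_V_def by auto

lemma in_bfV[simp]: "(l, c) \<in> bf_V d \<longleftrightarrow> l \<le> d \<and> length c = d"
  by (simp add: bf_V_def)

section \<open>Walks\<close>

lemma walk_nth: "is_walk V E xs \<Longrightarrow> Suc t < length xs \<Longrightarrow> E (xs!t) (xs!Suc t)"
  by (simp add: is_walk_def)

lemma walk_in: "is_walk V E xs \<Longrightarrow> t < length xs \<Longrightarrow> xs!t \<in> V"
  unfolding is_walk_def by auto

lemma walk_ne: "is_walk V E xs \<Longrightarrow> xs \<noteq> []"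
  by (simp add: is_walk_def)

lemma hd_nth0: "xs \<noteq> [] \<Longrightarrow> hd xs = xs ! 0"
  by (simp add: hd_conv_nth)

lemma last_nth: "xs \<noteq> [] \<Longrightarrow> last xs = xs ! (length xs - 1)"
  by (simp add: last_conv_nth)

lemma lvl_bound:
  assumes w: "is_walk (bf_V d) (bf_E d) xs" and "s \<le> t" and "t < length xs"
  shows "fst (xs!t) \<le> fst (xs!s) + (t - s) \<and> fst (xs!s) \<le> fst (xs!t) + (t - s)"
  using assms(2,3)
proof (induction t)
  case 0 then show ?case by simp
next
  case (Suc t)
  show ?case
  proof (cases "s = Suc t")
    case True then show ?thesis by simp
  next
    case False
    then have st: "s \<le> t" using Suc.prems by simp
    have IH: "fst (xs!t) \<le> fst (xs!s) + (t - s) \<and> fst (xs!s) \<le> fst (xs!t) + (t - s)"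
      using Suc.IH st Suc.prems by simp
    have "bf_E d (xs!t) (xs!Suc t)" using walk_nth[OF w] Suc.prems by simp
    then have "fst (xs!Suc t) = Suc (fst (xs!t)) \<or> fst (xs!t) = Suc (fst (xs!Suc t))"
      by (rule bfE_level)
    then show ?thesis using IH st by auto
  qed
qed

lemma lvl_exact_up:
  assumes w: "is_walk (bf_V d) (bf_E d) xs" and "n < length xs"
    and "fst (xs!0) = i" and "fst (xs!n) = i + n" and "t \<le> n"
  shows "fst (xs!t) = i + t"
  using lvl_bound[OF w, of 0 t] lvl_bound[OF w, of t n] assms by auto

lemma lvl_exact_down:
  assumes w: "is_walk (bf_V d) (bf_E d) xs" and "s + n < length xs"
    and "fst (xs!s) = h" and "fst (xs!(s+n)) + n = h" and "t \<le> n"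
  shows "fst (xs!(s+t)) + t = h"
  using lvl_bound[OF w, of s "s+t"] lvl_bound[OF w, of "s+t" "s+n"] assms by auto

lemma drop_flip: "l < h \<Longrightarrow> drop h (flip w l) = drop h w"
  by (simp add: flip_def)

lemma drop_inv:
  assumes w: "is_walk (bf_V d) (bf_E d) xs"
    and low: "\<forall>t<length xs. fst (xs!t) \<le> h" and "t < length xs"
  shows "drop h (snd (xs!t)) = drop h (snd (xs!0))"
  using assms(3)
proof (induction t)
  case 0 then show ?case by simp
next
  case (Suc t)
  have e: "bf_E d (xs!t) (xs!Suc t)" using walk_nth[OF w] Suc.prems by simp
  have l1: "fst (xs!t) \<le> h" "fst (xs!Suc t) \<le> h" using low Suc.prems by auto
  have "drop h (snd (xs!Suc t)) = drop h (snd (xs!t))"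
  proof (cases "fst (xs!Suc t) = Suc (fst (xs!t))")
    case True
    then show ?thesis using bfE_up[OF e True] l1 drop_flip by auto
  next
    case False
    then have up: "fst (xs!t) = Suc (fst (xs!Suc t))" using bfE_level[OF e] by auto
    show ?thesis using bfE_up[OF bfE_sym[OF e] up] l1 up drop_flip by auto
  qed
  then show ?case using Suc by simp
qed

lemma reach_level:
  assumes w: "is_walk (bf_V d) (bf_E d) xs"
    and "drop h (snd (xs!0)) \<noteq> drop h (snd (xs!(length xs - 1)))"
  shows "\<exists>t<length xs. h < fst (xs!t)"
proof (rule ccontr)
  assume "\<not> ?thesis"
  then have "\<forall>t<length xs. fst (xs!t) \<le> h" by auto
  from drop_inv[OF w this, of "length xs - 1"] walk_ne[OF w] assms(2) show False by simp
qed

lemma internal_nth: "0 < k \<Longrightarrow> Suc k < length xs \<Longrightarrow> xs ! k \<in> internal xs"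
  unfolding internal_def
proof -
  assume a: "0 < k" "Suc k < length xs"
  have "butlast (tl xs) ! (k - 1) = xs ! k"
    using a by (simp add: nth_butlast nth_tl)
  moreover have "k - 1 < length (butlast (tl xs))" using a by simp
  ultimately show "xs ! k \<in> set (butlast (tl xs))" by (metis nth_mem)
qed

lemma internal_nth_iff: "x \<in> internal xs \<longleftrightarrow> (\<exists>k. 0 < k \<and> Suc k < length xs \<and> x = xs ! k)"
proof
  assume "x \<in> internal xs"
  then obtain m where m: "m < length (butlast (tl xs))" "x = butlast (tl xs) ! m"
    unfolding internal_def by (metis in_set_conv_nth)
  then have "x = xs ! Suc m" by (simp add: nth_butlast nth_tl)
  then show "\<exists>k. 0 < k \<and> Suc k < length xs \<and> x = xs ! k" using m(1) by (intro exI[of _ "Suc m"]) auto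
next
  assume "\<exists>k. 0 < k \<and> Suc k < length xs \<and> x = xs ! k"
  then show "x \<in> internal xs" using internal_nth by blast
qed

lemma walk_map:
  assumes "\<forall>t\<le>n. f t \<in> V" and "\<forall>t<n. E (f t) (f (Suc t))"
  shows "walk_betw V E (f 0) (f n) (map f [0..<Suc n])"
  unfolding walk_betw_def is_walk_def using assms
  by (auto simp: hd_map last_map nth_map_upt simp del: upt_Suc)

lemma internal_map: "x \<in> internal (map f [0..<Suc n]) \<Longrightarrow> \<exists>k. 0 < k \<and> k < n \<and> x = f k"
  unfolding internal_nth_iff by (auto simp del: upt_Suc)

lemma gdist_le: "walk_betw V E x y xs \<Longrightarrow> gdist V E x y \<le> length xs - 1"
  unfolding gdist_def
  by (rule Least_le) (metis One_nat_def Suc_pred is_walk_def length_greater_0_conv walk_betw_def)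

lemma gdist_eq:
  assumes "walk_betw V E x y xs" "length xs = Suc n"
    and "\<And>ys. walk_betw V E x y ys \<Longrightarrow> Suc n \<le> length ys"
  shows "gdist V E x y = n"
  unfolding gdist_def
proof (rule Least_equality)
  show "\<exists>xs. walk_betw V E x y xs \<and> length xs = Suc n" using assms by blast
next
  fix m assume "\<exists>xs. walk_betw V E x y xs \<and> length xs = Suc m"
  then show "n \<le> m" using assms(3) by force
qed

lemma vis_path:
  assumes "X_visible V E X x y"
  obtains xs where "walk_betw V E x y xs" "length xs = Suc (gdist V E x y)" "internal xs \<inter> X = {}"
  using assms unfolding X_visible_def shortest_path_def by blast



definition mono_path :: "nat \<Rightarrow> (nat \<Rightarrow> bool list) \<Rightarrow> bool" where
  "mono_path d W \<longleftrightarrow> (\<forall>l\<le>d. length (W l) = d) \<and> (\<forall>l<d. W (Suc l) = W l \<or> W (Suc l) = flip (W l) l)"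

definition cnt :: "nat \<Rightarrow> (nat \<times> bool list) set \<Rightarrow> (nat \<Rightarrow> bool list) \<Rightarrow> nat" where
  "cnt d X W = card {l. l \<le> d \<and> (l, W l) \<in> X}"

definition stepseq :: "nat \<Rightarrow> nat \<Rightarrow> nat \<Rightarrow> (nat \<Rightarrow> bool list) \<Rightarrow> bool" where
  "stepseq d i j U \<longleftrightarrow> (\<forall>l. i \<le> l \<and> l \<le> j \<longrightarrow> length (U l) = d) \<and>
     (\<forall>l. i \<le> l \<and> l < j \<longrightarrow> U (Suc l) = U l \<or> U (Suc l) = flip (U l) l)"

lemma stepseq_unch:
  assumes "stepseq d i j U" "i \<le> l" "l \<le> l'" "l' \<le> j" "b < d" "b < l \<or> l' \<le> b"
  shows "U l' ! b = U l ! b"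
  using assms(3,4,6)
proof (induction l')
  case 0 then show ?case by simp
next
  case (Suc m)
  show ?case
  proof (cases "l = Suc m")
    case True then show ?thesis by simp
  next
    case False
    then have m: "l \<le> m" "m < j" using Suc.prems by auto
    have IH: "U m ! b = U l ! b" using Suc.IH m Suc.prems by auto
    have len: "length (U m) = d" using assms(1,2) m unfolding stepseq_def by auto
    have bm: "b \<noteq> m" using Suc.prems m by auto
    have "U (Suc m) = U m \<or> U (Suc m) = flip (U m) m" using assms(1,2) m unfolding stepseq_def by auto
    then show ?thesis using IH len bm assms(5) by (auto simp: nth_flip)
  qed
qed

lemma stepseq_det:
  assumes "stepseq d i j U" "stepseq d i j U'" "U i = U' i" "U j = U' j" "i \<le> k" "k \<le> j"
  shows "U k = U' k"
proof (rule nth_equalityI)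
  show "length (U k) = length (U' k)" using assms unfolding stepseq_def by auto
next
  fix b assume "b < length (U k)"
  then have b: "b < d" using assms unfolding stepseq_def by auto
  show "U k ! b = U' k ! b"
  proof (cases "i \<le> b \<and> b < k")
    case True
    have "U j ! b = U k ! b" using stepseq_unch[OF assms(1), of k j b] True assms b by auto
    moreover have "U' j ! b = U' k ! b" using stepseq_unch[OF assms(2), of k j b] True assms b by auto
    ultimately show ?thesis using assms(4) by simp
  next
    case False
    have "U k ! b = U i ! b" using stepseq_unch[OF assms(1), of i k b] False assms b by auto
    moreover have "U' k ! b = U' i ! b" using stepseq_unch[OF assms(2), of i k b] False assms b by auto
    ultimately show ?thesis using assms(3) by simp
  qed
qed

lemma mono_stepseq: "mono_path d W \<Longrightarrow> j \<le> d \<Longrightarrow> stepseq d i j W"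
  unfolding mono_path_def stepseq_def by auto

lemma walk_stepseq:
  assumes w: "is_walk (bf_V d) (bf_E d) xs" and n: "n < length xs"
    and lv: "\<And>t. t \<le> n \<Longrightarrow> fst (xs!t) = i + t"
  shows "stepseq d i (i+n) (\<lambda>l. snd (xs!(l - i)))"
  unfolding stepseq_def
proof (intro conjI allI impI)
  fix l assume l: "i \<le> l \<and> l \<le> i + n"
  have "xs!(l-i) \<in> bf_V d" using walk_in[OF w] l n by auto
  then show "length (snd (xs!(l - i))) = d" by (cases "xs!(l-i)") auto
next
  fix l assume l: "i \<le> l \<and> l < i + n"
  have e: "bf_E d (xs!(l-i)) (xs!Suc (l-i))" using walk_nth[OF w] l n by auto
  have "fst (xs!Suc (l-i)) = Suc (fst (xs!(l-i)))" using lv[of "l-i"] lv[of "Suc (l-i)"] l by auto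
  from bfE_up[OF e this] have "snd (xs!Suc (l-i)) = snd (xs!(l-i)) \<or> snd (xs!Suc (l-i)) = flip (snd (xs!(l-i))) l"
    using lv[of "l-i"] l by auto
  moreover have "Suc l - i = Suc (l - i)" using l by auto
  ultimately show "snd (xs!(Suc l - i)) = snd (xs!(l-i)) \<or> snd (xs!(Suc l - i)) = flip (snd (xs!(l-i))) l"
    by simp
qed

lemma mono_walk:
  assumes m: "mono_path d W" and "i \<le> j" "j \<le> d"
  shows "walk_betw (bf_V d) (bf_E d) (i, W i) (j, W j) (map (\<lambda>t. (i+t, W (i+t))) [0..<Suc (j-i)])"
proof -
  have "walk_betw (bf_V d) (bf_E d) ((\<lambda>t. (i+t, W (i+t))) 0) ((\<lambda>t. (i+t, W (i+t))) (j-i))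
     (map (\<lambda>t. (i+t, W (i+t))) [0..<Suc (j-i)])"
  proof (rule walk_map)
    show "\<forall>t\<le>j - i. (i + t, W (i + t)) \<in> bf_V d" using m assms unfolding mono_path_def by auto
    show "\<forall>t<j - i. bf_E d (i + t, W (i + t)) (i + Suc t, W (i + Suc t))"
    proof (intro allI impI)
      fix t assume t: "t < j - i"
      show "bf_E d (i + t, W (i + t)) (i + Suc t, W (i + Suc t))"
        by (rule bfE_intro) (use m assms t in \<open>auto simp: mono_path_def\<close>)
    qed
  qed
  then show ?thesis using assms by simp
qed

lemma mono_le2:
  assumes mv: "mutual_visibility_set (bf_V d) (bf_E d) X" and m: "mono_path d W"
  shows "cnt d X W \<le> 2"
proof (rule ccontr)
  let ?S = "{l. l \<le> d \<and> (l, W l) \<in> X}"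
  assume "\<not> cnt d X W \<le> 2"
  then have c3: "3 \<le> card ?S" unfolding cnt_def by simp
  have fin: "finite ?S" by (rule finite_subset[of _ "{..d}"]) auto
  have ne: "?S \<noteq> {}" using c3 by (metis card.empty not_numeral_le_zero)
  define i where "i = Min ?S"
  define j where "j = Max ?S"
  have iS: "i \<in> ?S" unfolding i_def using fin ne by (rule Min_in)
  have jS: "j \<in> ?S" unfolding j_def using fin ne by (rule Max_in)
  have "\<not> ?S \<subseteq> {i, j}"
  proof
    assume "?S \<subseteq> {i, j}"
    then have "card ?S \<le> card {i, j}" by (rule card_mono[rotated]) simp
    also have "\<dots> \<le> 2" by (simp add: card_insert_le_m1)
    finally show False using c3 by simp
  qed
  then obtain k where k: "k \<in> ?S" "k \<noteq> i" "k \<noteq> j" by blast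
  have "i \<le> k" unfolding i_def using fin k(1) by (rule Min_le)
  then have ik: "i < k" using k(2) by simp
  have "k \<le> j" unfolding j_def using fin k(1) by (rule Max_ge)
  then have kj: "k < j" using k(3) by simp
  have jd: "j \<le> d" using jS by simp
  have "X_visible (bf_V d) (bf_E d) X (i, W i) (j, W j)" using mv iS jS unfolding mutual_visibility_set_def by auto
  then obtain xs where xs: "walk_betw (bf_V d) (bf_E d) (i, W i) (j, W j) xs"
     "length xs = Suc (gdist (bf_V d) (bf_E d) (i, W i) (j, W j))" "internal xs \<inter> X = {}"
    by (rule vis_path)
  have w: "is_walk (bf_V d) (bf_E d) xs" using xs(1) unfolding walk_betw_def by simp
  have ne': "xs \<noteq> []" by (rule walk_ne[OF w])
  have x0: "xs!0 = (i, W i)" using xs(1) ne' unfolding walk_betw_def by (simp add: hd_nth0)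
  have xl: "xs!(length xs - 1) = (j, W j)" using xs(1) ne' unfolding walk_betw_def by (simp add: last_nth)
  have "gdist (bf_V d) (bf_E d) (i, W i) (j, W j) \<le> j - i"
    using gdist_le[OF mono_walk[OF m, of i j]] ik kj jd by simp
  then have len1: "length xs \<le> Suc (j - i)" using xs(2) by simp
  have "fst (xs!(length xs - 1)) \<le> fst (xs!0) + (length xs - 1 - 0)"
    using lvl_bound[OF w, of 0 "length xs - 1"] ne' by simp
  then have len2: "Suc (j - i) \<le> length xs" using x0 xl ik kj by simp
  have len: "length xs = Suc (j - i)" using len1 len2 by simp
  have lv: "\<And>t. t \<le> j - i \<Longrightarrow> fst (xs!t) = i + t"
    using lvl_exact_up[OF w, of "j - i" i] len x0 xl ik kj by auto
  have ss: "stepseq d i (i + (j - i)) (\<lambda>l. snd (xs!(l - i)))"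
    by (rule walk_stepseq[OF w _ lv]) (use len in auto)
  have ssW: "stepseq d i (i + (j - i)) W" using mono_stepseq[OF m] ik kj jd by simp
  have "snd (xs!(k - i)) = W k"
    by (rule stepseq_det[OF ss ssW, of k]) (use x0 xl len ik kj in auto)
  then have "xs!(k-i) = (k, W k)" using lv[of "k-i"] ik kj by (metis add_diff_inverse_nat less_imp_le_nat diff_le_mono not_less_iff_gr_or_eq prod.collapse)
  moreover have "xs!(k-i) \<in> internal xs" by (rule internal_nth) (use len ik kj in auto)
  ultimately show False using xs(3) k(1) by auto
qed



lemma card_words: "card {c::bool list. length c = d} = 2 ^ d"
proof -
  have "card {xs::bool list. set xs \<subseteq> UNIV \<and> length xs = d} = card (UNIV::bool set) ^ d"
    by (rule card_lists_length_eq) simp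
  then show ?thesis by simp
qed

lemma finite_words: "finite {c::bool list. length c = d}"
  using finite_lists_length_eq[of "UNIV::bool set" d] by simp

lemma finite_bfV: "finite (bf_V d)"
proof -
  have "bf_V d = {..d} \<times> {c. length c = d}" unfolding bf_V_def by auto
  then show ?thesis using finite_words by simp
qed

lemma card_level_sum:
  assumes "X \<subseteq> bf_V d"
  shows "card X = (\<Sum>l\<le>d. card {w. (l, w) \<in> X})"
proof -
  have eq: "X = (\<Union>l\<in>{..d}. Pair l ` {w. (l, w) \<in> X})" using assms unfolding bf_V_def by auto
  have fin: "\<And>l. finite {w. (l, w) \<in> X}"
    using finite_subset[OF _ finite_words] assms unfolding bf_V_def
    by (metis (mono_tags, lifting) case_prodD mem_Collect_eq subset_eq)
  have "card X = (\<Sum>l\<le>d. card (Pair l ` {w. (l, w) \<in> X}))"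
    by (subst eq, rule card_UN_disjoint) (use fin in auto)
  also have "\<dots> = (\<Sum>l\<le>d. card {w. (l, w) \<in> X})"
    by (rule sum.cong) (auto simp: card_image inj_on_def)
  finally show ?thesis .
qed

lemma cnt_sum: "cnt d X W = (\<Sum>l\<le>d. if (l, W l) \<in> X then 1 else 0)"
proof -
  have "(\<Sum>l\<le>d. if (l, W l) \<in> X then 1 else (0::nat)) = card ({..d} \<inter> {l. (l, W l) \<in> X})"
    by (simp add: sum.If_cases)
  moreover have "{..d} \<inter> {l. (l, W l) \<in> X} = {l. l \<le> d \<and> (l, W l) \<in> X}" by auto
  ultimately show ?thesis unfolding cnt_def by simp
qed

lemma card_filter_sum: "finite A \<Longrightarrow> card {a\<in>A. P a} = (\<Sum>a\<in>A. if P a then 1 else (0::nat))"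
  by (simp add: sum.If_cases Int_def)

fun Phi :: "(nat \<Rightarrow> bool list \<Rightarrow> bool list) \<Rightarrow> bool list \<Rightarrow> nat \<Rightarrow> bool list" where
  "Phi f a 0 = a"
| "Phi f a (Suc l) = f l (Phi f a l)"

definition good_sw :: "nat \<Rightarrow> (nat \<Rightarrow> bool list \<Rightarrow> bool list) \<Rightarrow> bool" where
  "good_sw d f \<longleftrightarrow> (\<forall>l<d. \<forall>w. length w = d \<longrightarrow> f l (f l w) = w \<and> (f l w = w \<or> f l w = flip w l))"

lemma good_sw_step: "good_sw d f \<Longrightarrow> l < d \<Longrightarrow> length w = d \<Longrightarrow> f l w = w \<or> f l w = flip w l"
  unfolding good_sw_def by blast

lemma good_sw_inv: "good_sw d f \<Longrightarrow> l < d \<Longrightarrow> length w = d \<Longrightarrow> f l (f l w) = w"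
  unfolding good_sw_def by blast

lemma Phi_len: "good_sw d f \<Longrightarrow> length a = d \<Longrightarrow> l \<le> d \<Longrightarrow> length (Phi f a l) = d"
proof (induction l)
  case 0 then show ?case by simp
next
  case (Suc l)
  then have w: "length (Phi f a l) = d" by simp
  have "l < d" using Suc.prems by simp
  then have "f l (Phi f a l) = Phi f a l \<or> f l (Phi f a l) = flip (Phi f a l) l"
    using good_sw_step[OF Suc.prems(1) _ w] by simp
  then show ?case using w by auto
qed

lemma Phi_mono: "good_sw d f \<Longrightarrow> length a = d \<Longrightarrow> mono_path d (Phi f a)"
  unfolding mono_path_def
proof (intro conjI allI impI)
  fix l assume "good_sw d f" "length a = d" "l \<le> d"
  then show "length (Phi f a l) = d" by (rule Phi_len)
next
  fix l assume g: "good_sw d f" "length a = d" "l < d"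
  then have "length (Phi f a l) = d" using Phi_len by simp
  then show "Phi f a (Suc l) = Phi f a l \<or> Phi f a (Suc l) = flip (Phi f a l) l"
    using good_sw_step[OF g(1) g(3)] by simp
qed

lemma Phi_bij:
  assumes g: "good_sw d f" and "l \<le> d"
  shows "bij_betw (\<lambda>a. Phi f a l) {c. length c = d} {c. length c = d}"
  using assms(2)
proof (induction l)
  case 0 then show ?case by (simp add: bij_betw_def)
next
  case (Suc l)
  have ld: "l < d" using Suc.prems by simp
  have b1: "bij_betw (f l) {c. length c = d} {c. length c = d}"
  proof (rule bij_betw_byWitness[where f'="f l"])
    show "\<forall>a\<in>{c. length c = d}. f l (f l a) = a" using good_sw_inv[OF g ld] by blast
    show "\<forall>a\<in>{c. length c = d}. f l (f l a) = a" using good_sw_inv[OF g ld] by blast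
    show "f l ` {c. length c = d} \<subseteq> {c. length c = d}"
    proof
      fix x assume "x \<in> f l ` {c. length c = d}"
      then obtain c where c: "length c = d" "x = f l c" by auto
      then show "x \<in> {c. length c = d}" using good_sw_step[OF g ld c(1)] by auto
    qed
    then show "f l ` {c. length c = d} \<subseteq> {c. length c = d}" .
  qed
  have "bij_betw (f l \<circ> (\<lambda>a. Phi f a l)) {c. length c = d} {c. length c = d}"
    by (rule bij_betw_trans[OF Suc.IH b1]) (use Suc.prems in simp)
  then show ?case by (simp add: comp_def)
qed

lemma partition_count:
  assumes X: "X \<subseteq> bf_V d" and g: "good_sw d f"
  shows "card X = (\<Sum>a\<in>{c. length c = d}. cnt d X (Phi f a))"
proof -
  let ?L = "{c::bool list. length c = d}"
  have lev: "card {w. (l, w) \<in> X} = (\<Sum>a\<in>?L. if (l, Phi f a l) \<in> X then 1 else 0)" if l: "l \<le> d" for l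
  proof -
    have bij: "bij_betw (\<lambda>a. Phi f a l) ?L ?L" by (rule Phi_bij[OF g l])
    have "{w. (l, w) \<in> X} = (\<lambda>a. Phi f a l) ` {a\<in>?L. (l, Phi f a l) \<in> X}"
    proof
      show "{w. (l, w) \<in> X} \<subseteq> (\<lambda>a. Phi f a l) ` {a \<in> ?L. (l, Phi f a l) \<in> X}"
      proof
        fix w assume "w \<in> {w. (l, w) \<in> X}"
        then have w: "(l, w) \<in> X" "w \<in> ?L" using X by auto
        have "w \<in> (\<lambda>a. Phi f a l) ` ?L" using bij_betw_imp_surj_on[OF bij] w(2) by simp
        then obtain a where "a \<in> ?L" "Phi f a l = w" by blast
        then show "w \<in> (\<lambda>a. Phi f a l) ` {a \<in> ?L. (l, Phi f a l) \<in> X}" using w by auto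
      qed
    qed auto
    moreover have "inj_on (\<lambda>a. Phi f a l) {a\<in>?L. (l, Phi f a l) \<in> X}"
      using bij_betw_imp_inj_on[OF bij] by (rule inj_on_subset) blast
    ultimately have "card {w. (l, w) \<in> X} = card {a\<in>?L. (l, Phi f a l) \<in> X}"
      by (simp add: card_image)
    also have "\<dots> = (\<Sum>a\<in>?L. if (l, Phi f a l) \<in> X then 1 else 0)"
      by (rule card_filter_sum[OF finite_words])
    finally show ?thesis .
  qed
  have "card X = (\<Sum>l\<le>d. card {w. (l, w) \<in> X})" by (rule card_level_sum[OF X])
  also have "\<dots> = (\<Sum>l\<le>d. \<Sum>a\<in>?L. if (l, Phi f a l) \<in> X then 1 else 0)"
    by (rule sum.cong) (use lev in auto)
  also have "\<dots> = (\<Sum>a\<in>?L. \<Sum>l\<le>d. if (l, Phi f a l) \<in> X then 1 else 0)"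
    by (rule sum.swap)
  also have "\<dots> = (\<Sum>a\<in>?L. cnt d X (Phi f a))"
    by (simp add: cnt_sum)
  finally show ?thesis .
qed

lemma good_id: "good_sw d (\<lambda>l w. w)"
  unfolding good_sw_def by auto

lemma Phi_id: "Phi (\<lambda>l w. w) a l = a"
  by (induction l) auto

lemma column_count:
  assumes "X \<subseteq> bf_V d"
  shows "card X = (\<Sum>a\<in>{c. length c = d}. cnt d X (\<lambda>l. a))"
  using partition_count[OF assms good_id] by (simp add: Phi_id[abs_def])

definition sw :: "(nat \<Rightarrow> bool list) \<Rightarrow> nat \<Rightarrow> bool list \<Rightarrow> bool" where
  "sw W l w \<longleftrightarrow> W (Suc l) \<noteq> W l \<and> (w = W l \<or> w = flip (W l) l)"

definition sw2 :: "(nat \<Rightarrow> bool list) \<Rightarrow> (nat \<Rightarrow> bool list) \<Rightarrow> nat \<Rightarrow> bool list \<Rightarrow> bool list" where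
  "sw2 W1 W2 l w = (if sw W1 l w \<or> sw W2 l w then flip w l else w)"

lemma sw_flip: "length (W l) = d \<Longrightarrow> length w = d \<Longrightarrow> l < d \<Longrightarrow> sw W l (flip w l) = sw W l w"
proof -
  assume a: "length (W l) = d" "length w = d" "l < d"
  have e1: "flip w l = W l \<longleftrightarrow> w = flip (W l) l"
  proof
    assume "flip w l = W l" then have "flip (flip w l) l = flip (W l) l" by simp
    then show "w = flip (W l) l" using a by simp
  next
    assume "w = flip (W l) l" then show "flip w l = W l" using a by simp
  qed
  have e2: "flip w l = flip (W l) l \<longleftrightarrow> w = W l" using flip_inj[of l w "W l"] a by simp
  show ?thesis unfolding sw_def using e1 e2 by blast
qed

lemma good_sw2:
  assumes "mono_path d W1" "mono_path d W2"
  shows "good_sw d (sw2 W1 W2)"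
  unfolding good_sw_def
proof (intro allI impI conjI)
  fix l :: nat and w :: "bool list" assume l: "l < d" and w: "length w = d"
  have len: "length (W1 l) = d" "length (W2 l) = d" using assms l unfolding mono_path_def by auto
  show "sw2 W1 W2 l (sw2 W1 W2 l w) = w"
  proof (cases "sw W1 l w \<or> sw W2 l w")
    case True
    then have "sw W1 l (flip w l) \<or> sw W2 l (flip w l)" using sw_flip[where W=W1, OF len(1) w l] sw_flip[where W=W2, OF len(2) w l] by simp
    then show ?thesis using True l w by (simp add: sw2_def)
  next
    case False
    then show ?thesis by (simp add: sw2_def)
  qed
  show "sw2 W1 W2 l w = w \<or> sw2 W1 W2 l w = flip w l" unfolding sw2_def by auto
qed

lemma Phi_sw2:
  assumes m1: "mono_path d W1" and m2: "mono_path d W2" and dj: "\<forall>l\<le>d. W1 l \<noteq> W2 l"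
    and "l \<le> d"
  shows "Phi (sw2 W1 W2) (W1 0) l = W1 l"
  using assms(4)
proof (induction l)
  case 0 then show ?case by simp
next
  case (Suc l)
  have l: "l < d" using Suc.prems by simp
  have IH: "Phi (sw2 W1 W2) (W1 0) (Suc l) = sw2 W1 W2 l (W1 l)" using Suc by simp
  have len: "length (W1 l) = d" "length (W2 l) = d" using m1 m2 l unfolding mono_path_def by auto
  have st1: "W1 (Suc l) = W1 l \<or> W1 (Suc l) = flip (W1 l) l" using m1 l unfolding mono_path_def by auto
  have st2: "W2 (Suc l) = W2 l \<or> W2 (Suc l) = flip (W2 l) l" using m2 l unfolding mono_path_def by auto
  have d1: "W1 l \<noteq> W2 l" "W1 (Suc l) \<noteq> W2 (Suc l)" using dj l by auto
  show ?case
  proof (cases "W1 (Suc l) = W1 l")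
    case True
    have "\<not> sw W2 l (W1 l)"
    proof
      assume "sw W2 l (W1 l)"
      then have "W2 (Suc l) = flip (W2 l) l" "W1 l = flip (W2 l) l" using st2 d1 unfolding sw_def by auto
      then show False using d1 True by simp
    qed
    moreover have "\<not> sw W1 l (W1 l)" using True unfolding sw_def by simp
    ultimately have "sw2 W1 W2 l (W1 l) = W1 l" unfolding sw2_def by simp
    then show ?thesis using IH True by simp
  next
    case False
    then have "sw W1 l (W1 l)" unfolding sw_def by simp
    then have "sw2 W1 W2 l (W1 l) = flip (W1 l) l" unfolding sw2_def by simp
    then show ?thesis using IH False st1 by simp
  qed
qed

lemma sw2_comm: "sw2 W1 W2 = sw2 W2 W1"
  unfolding sw2_def by (auto intro!: ext)

lemma cnt_cong: "(\<And>l. l \<le> d \<Longrightarrow> W l = W' l) \<Longrightarrow> cnt d X W = cnt d X W'"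
  unfolding cnt_def by (metis (no_types, lifting))

lemma two_paths:
  assumes mv: "mutual_visibility_set (bf_V d) (bf_E d) X"
    and m1: "mono_path d W1" and m2: "mono_path d W2" and dj: "\<forall>l\<le>d. W1 l \<noteq> W2 l"
  shows "card X + 4 \<le> 2 ^ Suc d + cnt d X W1 + cnt d X W2"
proof -
  let ?L = "{c::bool list. length c = d}"
  let ?f = "sw2 W1 W2"
  have X: "X \<subseteq> bf_V d" using mv unfolding mutual_visibility_set_def by simp
  have g: "good_sw d ?f" by (rule good_sw2[OF m1 m2])
  have a1: "W1 0 \<in> ?L" "W2 0 \<in> ?L" using m1 m2 unfolding mono_path_def by auto
  have a12: "W1 0 \<noteq> W2 0" using dj by auto
  have c1: "cnt d X (Phi ?f (W1 0)) = cnt d X W1"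
    by (rule cnt_cong) (rule Phi_sw2[OF m1 m2 dj])
  have c2: "cnt d X (Phi ?f (W2 0)) = cnt d X W2"
    using Phi_sw2[OF m2 m1] dj by (metis cnt_cong sw2_comm)
  have le2: "\<And>a. a \<in> ?L \<Longrightarrow> cnt d X (Phi ?f a) \<le> 2"
    by (rule mono_le2[OF mv Phi_mono[OF g]]) simp
  have "card X = (\<Sum>a\<in>?L. cnt d X (Phi ?f a))" by (rule partition_count[OF X g])
  also have "\<dots> = (\<Sum>a\<in>?L - {W1 0, W2 0}. cnt d X (Phi ?f a)) + (\<Sum>a\<in>{W1 0, W2 0}. cnt d X (Phi ?f a))"
    by (rule sum.subset_diff) (use a1 finite_words in auto)
  also have "(\<Sum>a\<in>{W1 0, W2 0}. cnt d X (Phi ?f a)) = cnt d X W1 + cnt d X W2"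
    using a12 c1 c2 by simp
  also have "(\<Sum>a\<in>?L - {W1 0, W2 0}. cnt d X (Phi ?f a)) \<le> (\<Sum>a\<in>?L - {W1 0, W2 0}. 2)"
    by (rule sum_mono) (use le2 in auto)
  also have "\<dots> = 2 * (2 ^ d - 2)"
  proof -
    have "card (?L - {W1 0, W2 0}) = 2 ^ d - 2"
      using a1 a12 by (simp add: card_Diff_subset card_words finite_words)
    then show ?thesis by simp
  qed
  finally have "card X \<le> 2 * (2 ^ d - 2) + cnt d X W1 + cnt d X W2" by simp
  moreover have "2 \<le> (2::nat) ^ d"
  proof -
    have "card {W1 0, W2 0} \<le> card ?L" by (rule card_mono[OF finite_words]) (use a1 in auto)
    then show ?thesis using a12 by (simp add: card_words)
  qed
  ultimately show ?thesis by simp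
qed



section \<open>Automorphisms\<close>

locale invol =
  fixes V :: "'a set" and E :: "'a \<Rightarrow> 'a \<Rightarrow> bool" and f :: "'a \<Rightarrow> 'a"
  assumes fV: "x \<in> V \<Longrightarrow> f x \<in> V"
    and ff: "x \<in> V \<Longrightarrow> f (f x) = x"
    and fE: "E x y \<Longrightarrow> E (f x) (f y)"
begin

lemma walk_f: "is_walk V E xs \<Longrightarrow> is_walk V E (map f xs)"
  unfolding is_walk_def using fV fE by auto

lemma walk_betw_f: "walk_betw V E x y xs \<Longrightarrow> walk_betw V E (f x) (f y) (map f xs)"
  unfolding walk_betw_def using walk_f by (auto simp: hd_map last_map is_walk_def)

lemma map_ff: "set xs \<subseteq> V \<Longrightarrow> map f (map f xs) = xs"
  by (induction xs) (auto simp: ff)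

lemma walk_betw_f_iff:
  assumes "x \<in> V" "y \<in> V"
  shows "(\<exists>xs. walk_betw V E (f x) (f y) xs \<and> length xs = n) \<longleftrightarrow> (\<exists>xs. walk_betw V E x y xs \<and> length xs = n)"
proof
  assume "\<exists>xs. walk_betw V E (f x) (f y) xs \<and> length xs = n"
  then obtain xs where xs: "walk_betw V E (f x) (f y) xs" "length xs = n" by blast
  have "walk_betw V E (f (f x)) (f (f y)) (map f xs)" using xs(1) by (rule walk_betw_f)
  then show "\<exists>xs. walk_betw V E x y xs \<and> length xs = n" using xs assms ff by auto
next
  assume "\<exists>xs. walk_betw V E x y xs \<and> length xs = n"
  then show "\<exists>xs. walk_betw V E (f x) (f y) xs \<and> length xs = n" using walk_betw_f by fastforce
qed

lemma gdist_f: "x \<in> V \<Longrightarrow> y \<in> V \<Longrightarrow> gdist V E (f x) (f y) = gdist V E x y"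
  unfolding gdist_def using walk_betw_f_iff by simp

lemma internal_f: "internal (map f xs) = f ` internal xs"
  unfolding internal_def by (simp add: map_tl[symmetric] map_butlast[symmetric])

lemma vis_f:
  assumes vis: "X_visible V E X x y" and X: "X \<subseteq> V" and xy: "x \<in> V" "y \<in> V"
  shows "X_visible V E (f ` X) (f x) (f y)"
proof -
  obtain xs where xs: "walk_betw V E x y xs" "length xs = Suc (gdist V E x y)" "internal xs \<inter> X = {}"
    using vis by (rule vis_path)
  have sub: "internal xs \<subseteq> V"
  proof
    fix p assume "p \<in> internal xs"
    then obtain k where "Suc k < length xs" "p = xs ! k" unfolding internal_nth_iff by blast
    then show "p \<in> V" using xs(1) unfolding walk_betw_def is_walk_def by (metis Suc_lessD nth_mem subset_iff)
  qed
  have "internal (map f xs) \<inter> f ` X = {}"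
  proof (rule ccontr)
    assume "internal (map f xs) \<inter> f ` X \<noteq> {}"
    then obtain p q where pq: "p \<in> internal xs" "q \<in> X" "f p = f q" by (auto simp: internal_f)
    have pV: "p \<in> V" "q \<in> V" using pq sub X by auto
    have "p = f (f p)" using ff[OF pV(1)] by simp
    also have "\<dots> = f (f q)" using pq by simp
    also have "\<dots> = q" using ff[OF pV(2)] by simp
    finally have "p = q" .
    then show False using pq xs(3) by auto
  qed
  moreover have "walk_betw V E (f x) (f y) (map f xs)" by (rule walk_betw_f[OF xs(1)])
  moreover have "length (map f xs) = Suc (gdist V E (f x) (f y))" using xs(2) gdist_f[OF xy] by simp
  ultimately show ?thesis unfolding X_visible_def shortest_path_def by blast
qed

lemma mv_f:
  assumes "mutual_visibility_set V E X"
  shows "mutual_visibility_set V E (f ` X)"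
  unfolding mutual_visibility_set_def
proof (intro conjI ballI)
  show "f ` X \<subseteq> V" using assms fV unfolding mutual_visibility_set_def by auto
next
  fix a b assume "a \<in> f ` X" "b \<in> f ` X"
  then obtain x y where "x \<in> X" "y \<in> X" "a = f x" "b = f y" by auto
  then show "X_visible V E (f ` X) a b"
    using vis_f assms unfolding mutual_visibility_set_def by blast
qed

end

definition rv :: "nat \<Rightarrow> nat \<times> bool list \<Rightarrow> nat \<times> bool list" where
  "rv d x = (d - fst x, rev (snd x))"

lemma rev_flip: "length c = d \<Longrightarrow> k < d \<Longrightarrow> rev (flip c k) = flip (rev c) (d - Suc k)"
  unfolding flip_def by (simp add: rev_update rev_nth)

lemma rv_invol: "invol (bf_V d) (bf_E d) (rv d)"
proof
  fix x assume "x \<in> bf_V d" then show "rv d x \<in> bf_V d" unfolding rv_def bf_V_def by auto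
next
  fix x assume "x \<in> bf_V d" then show "rv d (rv d x) = x" unfolding rv_def bf_V_def by auto
next
  have key: "bf_E d (rv d x) (rv d y)" if s: "bf_step d x y" for x y
  proof -
    obtain l c where x: "x = (l, c)" by (cases x)
    obtain l' c' where y: "y = (l', c')" by (cases y)
    have h: "l < d" "l' = Suc l" "length c = d" "length c' = d" "c' = c \<or> c' = flip c l"
      using s unfolding bf_step_def x y by auto
    have "bf_step d (rv d y) (rv d x)"
      unfolding bf_step_def rv_def x y
    proof (intro conjI)
      show "(d - fst (l', c'), rev (snd (l', c'))) \<in> bf_V d" using h by simp
      show "(d - fst (l, c), rev (snd (l, c))) \<in> bf_V d" using h by simp
      show "fst (d - fst (l', c'), rev (snd (l', c'))) < d" using h by simp
      show "fst (d - fst (l, c), rev (snd (l, c))) = Suc (fst (d - fst (l', c'), rev (snd (l', c'))))"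
        using h by simp
      have "rev c = rev c' \<or> rev c = flip (rev c') (d - Suc l)"
      proof (cases "c' = c")
        case True then show ?thesis by simp
      next
        case False
        then have "c' = flip c l" using h by simp
        then have "rev c' = flip (rev c) (d - Suc l)" using rev_flip h by simp
        moreover have "d - Suc l < length (rev c)" using h by simp
        ultimately show ?thesis by simp
      qed
      then show "snd (d - fst (l, c), rev (snd (l, c))) = snd (d - fst (l', c'), rev (snd (l', c'))) \<or>
          snd (d - fst (l, c), rev (snd (l, c))) =
          flip (snd (d - fst (l', c'), rev (snd (l', c')))) (fst (d - fst (l', c'), rev (snd (l', c'))))"
        using h by (simp add: Suc_diff_Suc)
    qed
    then show ?thesis unfolding bf_E_def by simp
  qed
  fix x y assume "bf_E d x y"
  then show "bf_E d (rv d x) (rv d y)" unfolding bf_E_def using key bf_E_def by blast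
qed

lemma rv_simp[simp]: "rv d (l, c) = (d - l, rev c)"
  by (simp add: rv_def)



lemma card_le1: "S \<subseteq> {x} \<Longrightarrow> card S \<le> 1"
  using card_mono[of "{x}" S] by simp

lemma two_pow_eq: "2 * (2 ^ d - 1) + 2 = (2::nat) ^ Suc d"
proof -
  have "(1::nat) \<le> 2 ^ d" by simp
  then obtain k where "(2::nat) ^ d = Suc k" by (metis Suc_le_D One_nat_def)
  then show ?thesis by simp
qed

lemma lowest:
  assumes "cnt d X (\<lambda>l. c) = 2"
  shows "\<exists>i<d. (i, c) \<in> X \<and> (\<forall>l<i. (l, c) \<notin> X)"
proof -
  let ?S = "{l. l \<le> d \<and> (l, c) \<in> X}"
  have "card ?S = 2" using assms unfolding cnt_def by simp
  then obtain x y where xy: "?S = {x, y}" "x \<noteq> y" unfolding card_2_iff by blast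
  define i where "i = min x y"
  have "i = x \<or> i = y" unfolding i_def by (simp add: min_def)
  then have iS: "i \<in> ?S" using xy by blast
  have "x \<le> d" "y \<le> d" using xy by auto
  then have "i < d" using xy(2) unfolding i_def by auto
  moreover have "\<forall>l<i. (l, c) \<notin> X"
  proof (intro allI impI)
    fix l assume l: "l < i"
    show "(l, c) \<notin> X"
    proof
      assume "(l, c) \<in> X"
      then have "l \<in> ?S" using l \<open>i < d\<close> by auto
      then show False using l xy unfolding i_def by auto
    qed
  qed
  ultimately show ?thesis using iS by auto
qed

lemma mono_bit: "mono_path d W \<Longrightarrow> l \<le> b \<Longrightarrow> b < d \<Longrightarrow> W l ! b = W 0 ! b"
  using stepseq_unch[OF mono_stepseq[of d W d 0], of 0 l b] by auto

lemma drop_flip_ne: "k < length a \<Longrightarrow> drop k a \<noteq> drop k (flip a k)"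
proof
  assume k: "k < length a" and e: "drop k a = drop k (flip a k)"
  have "drop k a ! 0 = a ! k" using k by simp
  moreover have "drop k (flip a k) ! 0 = (\<not> a ! k)" using k by (simp add: nth_flip)
  ultimately show False using e by simp
qed

lemma colsum:
  assumes X: "X \<subseteq> bf_V d" and eL: "length e = d"
    and full: "\<forall>c. length c = d \<longrightarrow> c \<noteq> e \<longrightarrow> cnt d X (\<lambda>l. c) = 2"
  shows "card X + 2 = 2 ^ Suc d + cnt d X (\<lambda>l. e)"
proof -
  let ?L = "{c::bool list. length c = d}"
  have "card X = (\<Sum>c\<in>?L. cnt d X (\<lambda>l. c))" by (rule column_count[OF X])
  also have "\<dots> = (\<Sum>c\<in>?L - {e}. cnt d X (\<lambda>l. c)) + cnt d X (\<lambda>l. e)"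
    using eL finite_words by (simp add: sum.remove[of ?L e] add.commute)
  also have "(\<Sum>c\<in>?L - {e}. cnt d X (\<lambda>l. c)) = (\<Sum>c\<in>?L - {e}. 2)"
    by (rule sum.cong) (use full in auto)
  also have "\<dots> = 2 * (2 ^ d - 1)" using eL by (simp add: card_Diff_singleton card_words finite_words)
  finally show ?thesis using two_pow_eq[of d] by simp
qed

lemma top_lemma:
  assumes d2: "2 \<le> d" and mv: "mutual_visibility_set (bf_V d) (bf_E d) X"
    and big: "2 ^ Suc d \<le> card X + 1"
    and eL: "length e = d"
    and full: "\<forall>c. length c = d \<longrightarrow> c \<noteq> e \<longrightarrow> cnt d X (\<lambda>l. c) = 2"
  shows "(d, e) \<notin> X \<and> (d, flip e (d - 1)) \<in> X"
proof -
  have XV: "X \<subseteq> bf_V d" using mv unfolding mutual_visibility_set_def by simp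
  define a where "a = flip e 0"
  define a' where "a' = flip a (d - 1)"
  have la: "length a = d" "length a' = d" unfolding a_def a'_def using eL by auto
  have d10: "d - 1 \<noteq> 0" "0 < d" "d - 1 < d" using d2 by auto
  have abit: "a ! (d - 1) = e ! (d - 1)" unfolding a_def using eL d10 by (simp add: nth_flip)
  have a'bit: "a' ! (d - 1) = (\<not> e ! (d - 1))" unfolding a'_def using la d10 abit by (simp add: nth_flip)
  have ae: "a \<noteq> e" unfolding a_def using flip_neq eL d10 by simp
  have a'e: "a' \<noteq> e" using a'bit by auto
  obtain i where i: "i < d" "(i, a) \<in> X" "\<forall>l<i. (l, a) \<notin> X"
    using lowest[of d X a] full la ae by auto
  obtain j where j: "j < d" "(j, a') \<in> X" "\<forall>l<j. (l, a') \<notin> X"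
    using lowest[of d X a'] full la a'e by auto
  have "X_visible (bf_V d) (bf_E d) X (i, a) (j, a')"
    using mv i j unfolding mutual_visibility_set_def by auto
  then obtain xs where xs: "walk_betw (bf_V d) (bf_E d) (i, a) (j, a') xs"
     "length xs = Suc (gdist (bf_V d) (bf_E d) (i, a) (j, a'))" "internal xs \<inter> X = {}"
    by (rule vis_path)
  have w: "is_walk (bf_V d) (bf_E d) xs" using xs(1) unfolding walk_betw_def by simp
  have ne: "xs \<noteq> []" by (rule walk_ne[OF w])
  have x0: "xs!0 = (i, a)" using xs(1) ne unfolding walk_betw_def by (simp add: hd_nth0)
  have xl: "xs!(length xs - 1) = (j, a')" using xs(1) ne unfolding walk_betw_def by (simp add: last_nth)
  define T where "T = d - i"
  define N where "N = T + (d - j)"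
  define g where "g t = (if t \<le> T then (i + t, if i + t = d then a' else a) else (2 * d - i - t, a'))" for t
  have gw: "walk_betw (bf_V d) (bf_E d) (g 0) (g N) (map g [0..<Suc N])"
  proof (rule walk_map)
    show "\<forall>t\<le>N. g t \<in> bf_V d" unfolding g_def N_def T_def using la i j by auto
    show "\<forall>t<N. bf_E d (g t) (g (Suc t))"
    proof (intro allI impI)
      fix t assume t: "t < N"
      show "bf_E d (g t) (g (Suc t))"
      proof (cases "Suc t \<le> T")
        case True
        then have it: "i + t < d" unfolding T_def using i by simp
        show ?thesis
        proof (cases "Suc (i + t) = d")
          case True
          then have "i + t = d - 1" by simp
          then show ?thesis unfolding g_def using la it \<open>Suc t \<le> T\<close> True
            by (intro bfE_intro) (auto simp: a'_def)
        next
          case False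
          then show ?thesis unfolding g_def using la it \<open>Suc t \<le> T\<close>
            by (intro bfE_intro) auto
        qed
      next
        case False
        then have "T \<le> t" by simp
        have "bf_E d (g (Suc t)) (g t)" unfolding g_def using la i j d10 t False \<open>T \<le> t\<close>
          by (intro bfE_intro) (auto simp: T_def N_def)
        then show ?thesis by (rule bfE_sym)
      qed
    qed
  qed
  have g0: "g 0 = (i, a)" unfolding g_def using i by auto
  have gN: "g N = (j, a')" unfolding g_def N_def T_def using i j by auto
  have "gdist (bf_V d) (bf_E d) (i, a) (j, a') \<le> N"
    using gdist_le[OF gw] g0 gN by simp
  then have len1: "length xs \<le> Suc N" using xs(2) by simp
  have "\<exists>t<length xs. d - 1 < fst (xs!t)"
    by (rule reach_level[OF w]) (use x0 xl la drop_flip_ne[of "d - 1" a] d10 in \<open>auto simp: a'_def\<close>)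
  then obtain t where t: "t < length xs" "d - 1 < fst (xs!t)" by blast
  have "fst (xs!t) \<le> d" using walk_in[OF w t(1)] by (cases "xs!t") auto
  then have ft: "fst (xs!t) = d" using t(2) by simp
  have "fst (xs!t) \<le> fst (xs!0) + (t - 0)" using lvl_bound[OF w, of 0 t] t by simp
  then have tT: "T \<le> t" using ft x0 unfolding T_def by simp
  have "fst (xs!t) \<le> fst (xs!(length xs - 1)) + (length xs - 1 - t)"
    using lvl_bound[OF w, of t "length xs - 1"] t by simp
  then have "d \<le> j + (length xs - 1 - t)" using ft xl by simp
  then have lenN: "length xs = Suc N" and tT': "t = T" using len1 tT t(1) unfolding N_def by auto
  have TN: "0 < T" "T < N" unfolding T_def N_def using i j by auto
  have lvup: "fst (xs!s) = i + s" if "s \<le> T" for s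
    by (rule lvl_exact_up[OF w, of T]) (use that lenN TN x0 ft tT' T_def i in auto)
  have lvdn: "fst (xs!(T + s)) + s = d" if "s \<le> d - j" for s
  proof (rule lvl_exact_down[OF w, of T "d - j"])
    show "T + (d - j) < length xs" using lenN N_def by simp
    show "fst (xs!T) = d" using ft tT' by simp
    show "fst (xs!(T + (d - j))) + (d - j) = d" using xl lenN N_def j by simp
    show "s \<le> d - j" by (rule that)
  qed
  define \<sigma> where "\<sigma> = snd (xs!T)"
  have xT: "xs!T = (d, \<sigma>)" using ft tT' \<sigma>_def by (simp add: prod_eq_iff)
  have xTint: "xs!T \<in> internal xs" by (rule internal_nth) (use TN lenN in auto)
  define p1 where "p1 l = (if l < i then a else snd (xs!(l - i)))" for l
  define p2 where "p2 l = (if l < j then a' else snd (xs!(T + (d - l))))" for l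
  have ss: "stepseq d i (i + T) (\<lambda>l. snd (xs!(l - i)))"
    by (rule walk_stepseq[OF w _ lvup]) (use lenN TN in auto)
  have iT: "i + T = d" unfolding T_def using i by simp
  have lenxs: "\<And>k. k < length xs \<Longrightarrow> length (snd (xs!k)) = d"
  proof -
    fix k assume "k < length xs"
    then have "xs!k \<in> bf_V d" by (rule walk_in[OF w])
    then show "length (snd (xs!k)) = d" by (cases "xs!k") simp
  qed
  have m1: "mono_path d p1"
    unfolding mono_path_def
  proof (intro conjI allI impI)
    fix l assume "l \<le> d"
    then show "length (p1 l) = d" unfolding p1_def using la lenxs lenN TN iT by auto
  next
    fix l assume l: "l < d"
    show "p1 (Suc l) = p1 l \<or> p1 (Suc l) = flip (p1 l) l"
    proof (cases "Suc l < i")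
      case True then show ?thesis unfolding p1_def by simp
    next
      case False
      show ?thesis
      proof (cases "Suc l = i")
        case True then show ?thesis unfolding p1_def using x0 by simp
      next
        case False
        then have "i \<le> l" using \<open>\<not> Suc l < i\<close> by simp
        then show ?thesis using ss l iT unfolding p1_def stepseq_def by auto
      qed
    qed
  qed
  have m2: "mono_path d p2"
    unfolding mono_path_def
  proof (intro conjI allI impI)
    fix l assume "l \<le> d"
    then show "length (p2 l) = d" unfolding p2_def using la lenxs lenN N_def by auto
  next
    fix l assume l: "l < d"
    show "p2 (Suc l) = p2 l \<or> p2 (Suc l) = flip (p2 l) l"
    proof (cases "Suc l < j")
      case True then show ?thesis unfolding p2_def by simp
    next
      case False
      show ?thesis
      proof (cases "Suc l = j")
        case True
        have "T + (d - Suc l) = N" using True unfolding N_def by simp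
        then show ?thesis unfolding p2_def using xl lenN True by simp
      next
        case False
        then have jl: "j \<le> l" using \<open>\<not> Suc l < j\<close> by simp
        define k where "k = T + (d - Suc l)"
        have k1: "Suc k = T + (d - l)" unfolding k_def using l by simp
        have kl: "Suc k < length xs" using k1 lenN N_def jl by simp
        have e: "bf_E d (xs!k) (xs!Suc k)" using walk_nth[OF w kl] .
        have "fst (xs!(T + (d - Suc l))) + (d - Suc l) = d" by (rule lvdn) (use l jl in simp)
        then have lk: "fst (xs!k) = Suc l" unfolding k_def using l by linarith
        have "fst (xs!(T + (d - l))) + (d - l) = d" by (rule lvdn) (use l jl in simp)
        then have lk1: "fst (xs!Suc k) = l" unfolding k1 using l by linarith
        have "snd (xs!k) = snd (xs!Suc k) \<or> snd (xs!k) = flip (snd (xs!Suc k)) l"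
          using bfE_up[OF bfE_sym[OF e]] lk lk1 by simp
        moreover have "\<not> Suc l < j" "\<not> l < j" using jl by auto
        ultimately show ?thesis unfolding p2_def k1[symmetric] k_def by simp
      qed
    qed
  qed
  have p1d: "p1 d = \<sigma>" unfolding p1_def \<sigma>_def T_def using i by simp
  have p2d: "p2 d = \<sigma>" unfolding p2_def \<sigma>_def using j by simp
  have p10: "p1 0 = a" unfolding p1_def using x0 by (cases "0 < i") auto
  have p20: "p2 0 = a'" unfolding p2_def using xl lenN N_def by (cases "0 < j") auto
  have b1: "p1 l ! (d - 1) = e ! (d - 1)" if "l < d" for l
    using mono_bit[OF m1, of l "d - 1"] that p10 abit d10 by simp
  have b2: "p2 l ! (d - 1) = (\<not> e ! (d - 1))" if "l < d" for l
    using mono_bit[OF m2, of l "d - 1"] that p20 a'bit d10 by simp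
  have lens: "length \<sigma> = d" using m1 p1d unfolding mono_path_def by auto
  have c1: "cnt d X p1 \<le> 1"
  proof -
    have "{l. l \<le> d \<and> (l, p1 l) \<in> X} \<subseteq> {i}"
    proof
      fix l assume l: "l \<in> {l. l \<le> d \<and> (l, p1 l) \<in> X}"
      show "l \<in> {i}"
      proof (rule ccontr)
        assume "l \<notin> {i}"
        then consider "l < i" | "i < l" by fastforce
        then show False
        proof cases
          case 1 then show False using l i(3) unfolding p1_def by auto
        next
          case 2
          have ld: "l \<le> d" using l by simp
          have "fst (xs!(l - i)) = l" using lvup[of "l - i"] 2 ld iT by simp
          then have "xs!(l - i) = (l, p1 l)" unfolding p1_def using 2 by (simp add: prod_eq_iff)
          moreover have "xs!(l - i) \<in> internal xs" by (rule internal_nth) (use 2 l iT lenN TN in auto)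
          ultimately show False using l xs(3) by auto
        qed
      qed
    qed
    then show ?thesis unfolding cnt_def by (rule card_le1)
  qed
  have c2gen: "{l. l \<le> d \<and> (l, p2 l) \<in> X} \<subseteq> {j} \<union> {l. l = d \<and> (l, p2 l) \<in> X}"
  proof
    fix l assume l: "l \<in> {l. l \<le> d \<and> (l, p2 l) \<in> X}"
    show "l \<in> {j} \<union> {l. l = d \<and> (l, p2 l) \<in> X}"
    proof (rule ccontr)
      assume nl: "l \<notin> {j} \<union> {l. l = d \<and> (l, p2 l) \<in> X}"
      then consider "l < j" | "j < l \<and> l < d" using l by fastforce
      then show False
      proof cases
        case 1 then show False using l j(3) unfolding p2_def by auto
      next
        case 2
        have "fst (xs!(T + (d - l))) + (d - l) = d" by (rule lvdn) (use 2 in linarith)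
        then have "fst (xs!(T + (d - l))) = l" using 2 by linarith
        then have "xs!(T + (d - l)) = (l, p2 l)" unfolding p2_def using 2 by (simp add: prod_eq_iff)
        moreover have "xs!(T + (d - l)) \<in> internal xs" by (rule internal_nth) (use 2 lenN TN N_def in auto)
        ultimately show False using l xs(3) by auto
      qed
    qed
  qed
  have c2: "cnt d X p2 \<le> 1"
  proof -
    have "(d, p2 d) \<notin> X" using xT xTint xs(3) p2d by auto
    then have "{l. l \<le> d \<and> (l, p2 l) \<in> X} \<subseteq> {j}" using c2gen by auto
    then show ?thesis unfolding cnt_def by (rule card_le1)
  qed
  define q2 where "q2 l = (if l = d then flip \<sigma> (d - 1) else p2 l)" for l
  have mq2: "mono_path d q2"
    unfolding mono_path_def
  proof (intro conjI allI impI)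
    fix l assume "l \<le> d" then show "length (q2 l) = d" using m2 lens unfolding q2_def mono_path_def by auto
  next
    fix l assume l: "l < d"
    show "q2 (Suc l) = q2 l \<or> q2 (Suc l) = flip (q2 l) l"
    proof (cases "Suc l = d")
      case True
      have st: "p2 (Suc l) = p2 l \<or> p2 (Suc l) = flip (p2 l) l" using m2 l unfolding mono_path_def by auto
      have lp: "length (p2 l) = d" using m2 l unfolding mono_path_def by auto
      have "flip \<sigma> (d - 1) = flip (p2 l) l \<or> flip \<sigma> (d - 1) = p2 l"
        using st True p2d lp l by auto
      then show ?thesis unfolding q2_def using True l by auto
    next
      case False
      then show ?thesis unfolding q2_def using m2 l unfolding mono_path_def by auto
    qed
  qed
  have dj12: "\<forall>l\<le>d. p1 l \<noteq> q2 l"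
  proof (intro allI impI)
    fix l assume l: "l \<le> d"
    show "p1 l \<noteq> q2 l"
    proof (cases "l = d")
      case True then show ?thesis unfolding q2_def using p1d flip_neq[of "d - 1" \<sigma>] lens d10 by auto
    next
      case False
      then show ?thesis unfolding q2_def using b1[of l] b2[of l] l by auto
    qed
  qed
  have top': "(d, flip \<sigma> (d - 1)) \<in> X"
  proof (rule ccontr)
    assume nX: "(d, flip \<sigma> (d - 1)) \<notin> X"
    have "{l. l \<le> d \<and> (l, q2 l) \<in> X} \<subseteq> {j}"
    proof
      fix l assume l: "l \<in> {l. l \<le> d \<and> (l, q2 l) \<in> X}"
      then have "l \<noteq> d" using nX unfolding q2_def by auto
      then have "l \<in> {l. l \<le> d \<and> (l, p2 l) \<in> X}" using l unfolding q2_def by auto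
      then show "l \<in> {j}" using c2gen \<open>l \<noteq> d\<close> by auto
    qed
    then have "cnt d X q2 \<le> 1" unfolding cnt_def by (rule card_le1)
    then show False using two_paths[OF mv m1 mq2 dj12] c1 big by simp
  qed
  \<comment> \<open>p2 must meet the deficient column\<close>
  have cs: "card X + 2 = 2 ^ Suc d + cnt d X (\<lambda>l. e)" by (rule colsum[OF XV eL full])
  have "\<not> (\<forall>l\<le>d. p2 l \<noteq> e)"
  proof
    assume dj: "\<forall>l\<le>d. p2 l \<noteq> e"
    have me: "mono_path d (\<lambda>l. e)" unfolding mono_path_def using eL by simp
    show False using two_paths[OF mv m2 me] dj c2 cs by simp
  qed
  then obtain l where l: "l \<le> d" "p2 l = e" by blast
  have "l = d"
  proof (rule ccontr)
    assume "l \<noteq> d" then have "l < d" using l by simp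
    then show False using b2 l by auto
  qed
  then have se: "\<sigma> = e" using l p2d by simp
  have "(d, e) \<notin> X" using xT xTint xs(3) se by auto
  then show ?thesis using top' se by simp
qed



lemma rv_mem:
  assumes X: "X \<subseteq> bf_V d" and l: "l \<le> d" and c: "length c = d"
  shows "(l, c) \<in> rv d ` X \<longleftrightarrow> (d - l, rev c) \<in> X"
proof
  assume "(l, c) \<in> rv d ` X"
  then obtain x where x: "x \<in> X" "rv d x = (l, c)" by auto
  have xV: "x \<in> bf_V d" using x X by auto
  have "x = rv d (rv d x)" using invol.ff[OF rv_invol xV] by simp
  then have "x = (d - l, rev c)" using x(2) by simp
  then show "(d - l, rev c) \<in> X" using x by simp
next
  assume "(d - l, rev c) \<in> X"
  moreover have "rv d (d - l, rev c) = (l, c)" using l by simp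
  ultimately show "(l, c) \<in> rv d ` X" by (metis image_eqI)
qed

lemma cnt_rv:
  assumes X: "X \<subseteq> bf_V d" and c: "length c = d"
  shows "cnt d (rv d ` X) (\<lambda>l. c) = cnt d X (\<lambda>l. rev c)"
proof -
  have "{l. l \<le> d \<and> (l, c) \<in> rv d ` X} = (\<lambda>l. d - l) ` {l. l \<le> d \<and> (l, rev c) \<in> X}"
  proof
    show "{l. l \<le> d \<and> (l, c) \<in> rv d ` X} \<subseteq> (\<lambda>l. d - l) ` {l. l \<le> d \<and> (l, rev c) \<in> X}"
    proof
      fix l assume "l \<in> {l. l \<le> d \<and> (l, c) \<in> rv d ` X}"
      then have l: "l \<le> d" "(d - l, rev c) \<in> X" using rv_mem[OF X _ c] by auto
      then have "d - l \<in> {l. l \<le> d \<and> (l, rev c) \<in> X}" by simp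
      moreover have "l = d - (d - l)" using l by simp
      ultimately show "l \<in> (\<lambda>l. d - l) ` {l. l \<le> d \<and> (l, rev c) \<in> X}" by blast
    qed
  next
    show "(\<lambda>l. d - l) ` {l. l \<le> d \<and> (l, rev c) \<in> X} \<subseteq> {l. l \<le> d \<and> (l, c) \<in> rv d ` X}"
    proof
      fix m assume "m \<in> (\<lambda>l. d - l) ` {l. l \<le> d \<and> (l, rev c) \<in> X}"
      then obtain l where l: "l \<le> d" "(l, rev c) \<in> X" "m = d - l" by auto
      then have "(d - m, rev c) \<in> X" by simp
      then show "m \<in> {l. l \<le> d \<and> (l, c) \<in> rv d ` X}" using rv_mem[OF X _ c, of m] l by simp
    qed
  qed
  moreover have "inj_on (\<lambda>l. d - l) {l. l \<le> d \<and> (l, rev c) \<in> X}"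
    by (rule inj_onI) auto
  ultimately show ?thesis unfolding cnt_def by (simp add: card_image)
qed

lemma upper_bound:
  assumes d2: "2 \<le> d" and mv: "mutual_visibility_set (bf_V d) (bf_E d) X"
  shows "card X + 2 \<le> 2 ^ Suc d"
proof (rule ccontr)
  assume "\<not> card X + 2 \<le> 2 ^ Suc d"
  then have big: "2 ^ Suc d \<le> card X + 1" by simp
  have XV: "X \<subseteq> bf_V d" using mv unfolding mutual_visibility_set_def by simp
  let ?L = "{c::bool list. length c = d}"
  have le2: "\<And>c. length c = d \<Longrightarrow> cnt d X (\<lambda>l. c) \<le> 2"
    by (rule mono_le2[OF mv]) (simp add: mono_path_def)
  have cc: "card X = (\<Sum>c\<in>?L. cnt d X (\<lambda>l. c))" by (rule column_count[OF XV])
  have twodef: False if c12: "length c1 = d" "length c2 = d" "c1 \<noteq> c2"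
     "cnt d X (\<lambda>l. c1) \<le> 1" "cnt d X (\<lambda>l. c2) \<le> 1" for c1 c2
  proof -
    have "card X = (\<Sum>c\<in>?L - {c1, c2}. cnt d X (\<lambda>l. c)) + (\<Sum>c\<in>{c1, c2}. cnt d X (\<lambda>l. c))"
      using cc by (simp add: sum.subset_diff[of "{c1, c2}" ?L] finite_words c12)
    also have "(\<Sum>c\<in>{c1, c2}. cnt d X (\<lambda>l. c)) \<le> 2" using c12 by simp
    also have "(\<Sum>c\<in>?L - {c1, c2}. cnt d X (\<lambda>l. c)) \<le> (\<Sum>c\<in>?L - {c1, c2}. 2)"
      by (rule sum_mono) (use le2 in simp)
    also have "\<dots> = 2 * (2 ^ d - 2)"
      using c12 by (simp add: card_Diff_subset card_words finite_words)
    finally have "card X \<le> 2 * (2 ^ d - 2) + 2" by simp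
    moreover have "(2::nat) \<le> 2 ^ d"
    proof -
      have "card {c1, c2} \<le> card ?L" by (rule card_mono[OF finite_words]) (use c12 in auto)
      then show ?thesis using c12 by (simp add: card_words)
    qed
    ultimately show False using big by simp
  qed
  obtain e where eL: "length e = d" and full: "\<forall>c. length c = d \<longrightarrow> c \<noteq> e \<longrightarrow> cnt d X (\<lambda>l. c) = 2"
  proof (cases "\<exists>c. length c = d \<and> cnt d X (\<lambda>l. c) \<noteq> 2")
    case True
    then obtain e where e: "length e = d" "cnt d X (\<lambda>l. e) \<noteq> 2" by blast
    have "\<forall>c. length c = d \<longrightarrow> c \<noteq> e \<longrightarrow> cnt d X (\<lambda>l. c) = 2"
    proof (intro allI impI)
      fix c assume c: "length c = d" "c \<noteq> e"
      show "cnt d X (\<lambda>l. c) = 2"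
      proof (rule ccontr)
        assume "cnt d X (\<lambda>l. c) \<noteq> 2"
        then show False using twodef[of c e] c e le2[of c] le2[of e] by simp
      qed
    qed
    then show ?thesis using that e by blast
  next
    case False
    then show ?thesis using that[of "replicate d False"] by auto
  qed
  have top: "(d, e) \<notin> X \<and> (d, flip e (d - 1)) \<in> X" by (rule top_lemma[OF d2 mv big eL full])
  let ?Y = "rv d ` X"
  have mvY: "mutual_visibility_set (bf_V d) (bf_E d) ?Y" by (rule invol.mv_f[OF rv_invol mv])
  have "inj_on (rv d) X"
  proof (rule inj_onI)
    fix x y assume "x \<in> X" "y \<in> X" "rv d x = rv d y"
    then show "x = y" using invol.ff[OF rv_invol] XV by (metis subsetD)
  qed
  then have cY: "card ?Y = card X" by (rule card_image)
  have fullY: "\<forall>c. length c = d \<longrightarrow> c \<noteq> rev e \<longrightarrow> cnt d ?Y (\<lambda>l. c) = 2"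
  proof (intro allI impI)
    fix c assume c: "length c = d" "c \<noteq> rev e"
    then have "rev c \<noteq> e" by auto
    then show "cnt d ?Y (\<lambda>l. c) = 2" using cnt_rv[OF XV c(1)] full c by simp
  qed
  have topY: "(d, rev e) \<notin> ?Y \<and> (d, flip (rev e) (d - 1)) \<in> ?Y"
    by (rule top_lemma[OF d2 mvY]) (use big cY eL fullY in auto)
  have bot1: "(0, e) \<notin> X" using topY rv_mem[OF XV, of d "rev e"] eL by simp
  have "rev (flip (rev e) (d - 1)) = flip e 0" using rev_flip[of "rev e" d "d - 1"] eL d2 by simp
  then have bot2: "(0, flip e 0) \<in> X" using topY rv_mem[OF XV, of d "flip (rev e) (d - 1)"] eL by simp
  have cs: "card X + 2 = 2 ^ Suc d + cnt d X (\<lambda>l. e)" by (rule colsum[OF XV eL full])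
  then have "cnt d X (\<lambda>l. e) \<noteq> 0" using big by simp
  then have "{l. l \<le> d \<and> (l, e) \<in> X} \<noteq> {}" unfolding cnt_def by (metis card.empty)
  then obtain k where k: "k \<le> d" "(k, e) \<in> X" by blast
  have k0: "k \<noteq> 0" "k \<noteq> d"
  proof -
    show "k \<noteq> 0" proof assume "k = 0" then show False using k(2) bot1 by simp qed
    show "k \<noteq> d" proof assume "k = d" then show False using k(2) top by simp qed
  qed
  define W where "W l = (if l = 0 then flip e 0 else if l = d then flip e (d - 1) else e)" for l
  have mW: "mono_path d W"
    unfolding mono_path_def
  proof (intro conjI allI impI)
    fix l assume "l \<le> d" then show "length (W l) = d" unfolding W_def using eL by auto
  next
    fix l assume l: "l < d"
    show "W (Suc l) = W l \<or> W (Suc l) = flip (W l) l"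
    proof (cases "l = 0")
      case True then show ?thesis unfolding W_def using eL d2 by auto
    next
      case False
      show ?thesis
      proof (cases "Suc l = d")
        case True
        then have "l = d - 1" by simp
        then show ?thesis unfolding W_def using eL d2 l False True by auto
      next
        case False
        then show ?thesis unfolding W_def using eL d2 l \<open>l \<noteq> 0\<close> by auto
      qed
    qed
  qed
  have "{0, k, d} \<subseteq> {l. l \<le> d \<and> (l, W l) \<in> X}"
    unfolding W_def using k k0 bot2 top by auto
  then have "card {0, k, d} \<le> cnt d X W" unfolding cnt_def
    by (rule card_mono[rotated]) (rule finite_subset[of _ "{..d}"], auto)
  moreover have "card {0, k, d} = 3" using k0 d2 by auto
  ultimately show False using mono_le2[OF mv mW] by simp
qed



definition Xc :: "nat \<Rightarrow> bool list \<Rightarrow> bool list \<Rightarrow> (nat \<times> bool list) set" where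
  "Xc d s t = {(0, c) | c. length c = d \<and> c \<noteq> s} \<union> {(d, c) | c. length c = d \<and> c \<noteq> t}"

lemma in_Xc: "(l, w) \<in> Xc d s t \<longleftrightarrow> (l = 0 \<and> length w = d \<and> w \<noteq> s) \<or> (l = d \<and> length w = d \<and> w \<noteq> t)"
  unfolding Xc_def by auto

lemma tdnth: "length a = d \<Longrightarrow> length w = d \<Longrightarrow> b < d \<Longrightarrow>
  (take k a @ drop k w) ! b = (if b < k then a ! b else w ! b)"
  by (auto simp: nth_append min_def)

lemma td_len: "length a = d \<Longrightarrow> length w = d \<Longrightarrow> length (take k a @ drop k w) = d"
  by simp

lemma tstep:
  assumes "length a = d" "length w = d" "l < d"
  shows "take (Suc l) a @ drop (Suc l) w = take l a @ drop l w \<or>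
         take (Suc l) a @ drop (Suc l) w = flip (take l a @ drop l w) l"
proof (cases "a ! l = w ! l")
  case True
  have "take (Suc l) a @ drop (Suc l) w = take l a @ drop l w"
    by (rule nth_equalityI) (use assms True in \<open>auto simp: tdnth less_Suc_eq\<close>)
  then show ?thesis by simp
next
  case False
  have "take (Suc l) a @ drop (Suc l) w = flip (take l a @ drop l w) l"
    by (rule nth_equalityI) (use assms False in \<open>auto simp: tdnth nth_flip less_Suc_eq\<close>)
  then show ?thesis by simp
qed

lemma vis_refl:
  assumes "x \<in> V"
  shows "X_visible V E X x x"
proof -
  have w: "walk_betw V E x x [x]" unfolding walk_betw_def is_walk_def using assms by simp
  have "gdist V E x x = 0"
    by (rule gdist_eq[OF w]) (auto simp: walk_betw_def is_walk_def Suc_le_eq)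
  then show ?thesis unfolding X_visible_def shortest_path_def internal_def using w by auto
qed

lemma vis00:
  assumes d1: "1 \<le> d" and c: "length c = d" "length c' = d" and st: "length t = d"
  shows "X_visible (bf_V d) (bf_E d) (Xc d s t) (0, c) (0, c')"
proof (cases "c = c'")
  case True then show ?thesis using vis_refl[of "(0, c)" "bf_V d"] c by simp
next
  case False
  define h where "h = (LEAST h. drop h c = drop h c')"
  have hd: "h \<le> d" unfolding h_def by (rule Least_le) (use c in simp)
  have heq: "drop h c = drop h c'" unfolding h_def by (rule LeastI[of _ d]) (use c in simp)
  have h0: "h \<noteq> 0"
  proof
    assume "h = 0" then show False using heq False by simp
  qed
  have hne: "drop (h - 1) c \<noteq> drop (h - 1) c'"
  proof
    assume "drop (h - 1) c = drop (h - 1) c'"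
    then have "h \<le> h - 1" unfolding h_def by (rule Least_le)
    then show False using h0 by simp
  qed
  define \<tau> where "\<tau> = (if h < d then c' else t)"
  have lt: "length \<tau> = d" unfolding \<tau>_def using c st by simp
  define f where "f k = (if k \<le> h then (k, take k \<tau> @ drop k c) else (2 * h - k, take (2 * h - k) \<tau> @ drop (2 * h - k) c'))" for k
  have fh: "f k = (2 * h - k, take (2 * h - k) \<tau> @ drop (2 * h - k) c')" if "h \<le> k" for k
  proof (cases "k = h")
    case True
    have "take h \<tau> @ drop h c = take h \<tau> @ drop h c'" using heq by simp
    then show ?thesis unfolding f_def using True by simp
  next
    case False then show ?thesis unfolding f_def using that by simp
  qed
  have wf: "walk_betw (bf_V d) (bf_E d) (f 0) (f (2 * h)) (map f [0..<Suc (2 * h)])"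
  proof (rule walk_map)
    show "\<forall>k\<le>2 * h. f k \<in> bf_V d" unfolding f_def using lt c hd by auto
    show "\<forall>k<2 * h. bf_E d (f k) (f (Suc k))"
    proof (intro allI impI)
      fix k assume k: "k < 2 * h"
      show "bf_E d (f k) (f (Suc k))"
      proof (cases "Suc k \<le> h")
        case True
        then show ?thesis unfolding f_def using lt c hd tstep[OF lt c(1), of k]
          by (intro bfE_intro) auto
      next
        case False
        define m where "m = 2 * h - Suc k"
        have m: "2 * h - k = Suc m" "m < d" unfolding m_def using k False hd by auto
        have fk: "f k = (Suc m, take (Suc m) \<tau> @ drop (Suc m) c')" using fh[of k] False m(1) by simp
        have fk1: "f (Suc k) = (m, take m \<tau> @ drop m c')" using fh[of "Suc k"] False unfolding m_def by simp
        have "bf_E d (f (Suc k)) (f k)"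
          unfolding fk fk1 using m lt c hd tstep[OF lt c(2), of m]
          by (intro bfE_intro) auto
        then show ?thesis by (rule bfE_sym)
      qed
    qed
  qed
  have f0: "f 0 = (0, c)" unfolding f_def by simp
  have f2: "f (2 * h) = (0, c')" using fh[of "2 * h"] by simp
  have gd: "gdist (bf_V d) (bf_E d) (0, c) (0, c') = 2 * h"
  proof (rule gdist_eq)
    show "walk_betw (bf_V d) (bf_E d) (0, c) (0, c') (map f [0..<Suc (2 * h)])" using wf f0 f2 by simp
    show "length (map f [0..<Suc (2 * h)]) = Suc (2 * h)" by simp
  next
    fix ys assume ys: "walk_betw (bf_V d) (bf_E d) (0, c) (0, c') ys"
    have w: "is_walk (bf_V d) (bf_E d) ys" using ys unfolding walk_betw_def by simp
    have ne: "ys \<noteq> []" by (rule walk_ne[OF w])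
    have y0: "ys!0 = (0, c)" using ys ne unfolding walk_betw_def by (simp add: hd_nth0)
    have yl: "ys!(length ys - 1) = (0, c')" using ys ne unfolding walk_betw_def by (simp add: last_nth)
    obtain t where t: "t < length ys" "h - 1 < fst (ys!t)"
      using reach_level[OF w, of "h - 1"] y0 yl hne by auto
    have "fst (ys!t) \<le> fst (ys!0) + (t - 0)" using lvl_bound[OF w, of 0 t] t by simp
    moreover have "fst (ys!t) \<le> fst (ys!(length ys - 1)) + (length ys - 1 - t)"
      using lvl_bound[OF w, of t "length ys - 1"] t by simp
    ultimately show "Suc (2 * h) \<le> length ys" using t y0 yl h0 by simp
  qed
  have int: "internal (map f [0..<Suc (2 * h)]) \<inter> Xc d s t = {}"
  proof (rule ccontr)
    assume "internal (map f [0..<Suc (2 * h)]) \<inter> Xc d s t \<noteq> {}"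
    then obtain x where x: "x \<in> internal (map f [0..<Suc (2 * h)])" "x \<in> Xc d s t" by blast
    obtain k where k: "0 < k" "k < 2 * h" "x = f k" using internal_map[OF x(1)] by blast
    show False
    proof (cases "k \<le> h")
      case True
      then have fk: "f k = (k, take k \<tau> @ drop k c)" unfolding f_def by simp
      show False
      proof (cases "k = d")
        case True
        then have "h = d" using hd \<open>k \<le> h\<close> by simp
        then have "take k \<tau> @ drop k c = t" unfolding \<tau>_def using True c st by simp
        then show False using x(2) k fk True by (simp add: in_Xc)
      next
        case False
        then show False using x(2) k fk by (simp add: in_Xc)
      qed
    next
      case False
      then have "f k = (2 * h - k, take (2 * h - k) \<tau> @ drop (2 * h - k) c')" using fh by simp
      moreover have "0 < 2 * h - k" "2 * h - k < d" using k False hd by auto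
      ultimately show False using x(2) k by (simp add: in_Xc)
    qed
  qed
  show ?thesis unfolding X_visible_def shortest_path_def
    using wf f0 f2 gd int by (intro exI[of _ "map f [0..<Suc (2 * h)]"]) simp
qed

lemma vis0d:
  assumes d1: "1 \<le> d" and c: "length c = d" "length c' = d"
  shows "X_visible (bf_V d) (bf_E d) (Xc d s t) (0, c) (d, c')"
proof -
  define f where "f k = (k, take k c' @ drop k c)" for k
  have wf: "walk_betw (bf_V d) (bf_E d) (f 0) (f d) (map f [0..<Suc d])"
  proof (rule walk_map)
    show "\<forall>k\<le>d. f k \<in> bf_V d" unfolding f_def using c by auto
    show "\<forall>k<d. bf_E d (f k) (f (Suc k))"
    proof (intro allI impI)
      fix k assume k: "k < d"
      show "bf_E d (f k) (f (Suc k))"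
        unfolding f_def by (rule bfE_intro) (use c k tstep[OF c(2) c(1) k] in auto)
    qed
  qed
  have f0: "f 0 = (0, c)" unfolding f_def by simp
  have fd: "f d = (d, c')" unfolding f_def using c by simp
  have gd: "gdist (bf_V d) (bf_E d) (0, c) (d, c') = d"
  proof (rule gdist_eq)
    show "walk_betw (bf_V d) (bf_E d) (0, c) (d, c') (map f [0..<Suc d])" using wf f0 fd by simp
    show "length (map f [0..<Suc d]) = Suc d" by simp
  next
    fix ys assume ys: "walk_betw (bf_V d) (bf_E d) (0, c) (d, c') ys"
    have w: "is_walk (bf_V d) (bf_E d) ys" using ys unfolding walk_betw_def by simp
    have ne: "ys \<noteq> []" by (rule walk_ne[OF w])
    have y0: "ys!0 = (0, c)" using ys ne unfolding walk_betw_def by (simp add: hd_nth0)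
    have yl: "ys!(length ys - 1) = (d, c')" using ys ne unfolding walk_betw_def by (simp add: last_nth)
    have "fst (ys!(length ys - 1)) \<le> fst (ys!0) + (length ys - 1 - 0)"
      using lvl_bound[OF w, of 0 "length ys - 1"] ne by simp
    then have "d \<le> length ys - 1" using y0 yl by simp
    moreover have "0 < length ys" using ne by simp
    ultimately show "Suc d \<le> length ys" by linarith
  qed
  have int: "internal (map f [0..<Suc d]) \<inter> Xc d s t = {}"
  proof (rule ccontr)
    assume "internal (map f [0..<Suc d]) \<inter> Xc d s t \<noteq> {}"
    then obtain x where x: "x \<in> internal (map f [0..<Suc d])" "x \<in> Xc d s t" by blast
    obtain k where k: "0 < k" "k < d" "x = f k" using internal_map[OF x(1)] by blast
    then show False using x(2) unfolding f_def by (simp add: in_Xc)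
  qed
  show ?thesis unfolding X_visible_def shortest_path_def
    using wf f0 fd gd int by (intro exI[of _ "map f [0..<Suc d]"]) simp
qed

lemma rv_Xc: "rv d ` Xc d s t = Xc d (rev t) (rev s)"
proof
  show "rv d ` Xc d s t \<subseteq> Xc d (rev t) (rev s)"
  proof
    fix y assume "y \<in> rv d ` Xc d s t"
    then obtain l w where lw: "(l, w) \<in> Xc d s t" "y = rv d (l, w)" by auto
    then show "y \<in> Xc d (rev t) (rev s)" unfolding in_Xc by (auto simp: in_Xc)
  qed
next
  show "Xc d (rev t) (rev s) \<subseteq> rv d ` Xc d s t"
  proof
    fix y assume y: "y \<in> Xc d (rev t) (rev s)"
    obtain l w where yl: "y = (l, w)" by (cases y)
    have "(d - l, rev w) \<in> Xc d s t" using y yl by (auto simp: in_Xc)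
    moreover have "rv d (d - l, rev w) = y" using y yl by (auto simp: in_Xc)
    ultimately show "y \<in> rv d ` Xc d s t" by (metis image_eqI)
  qed
qed

lemma Xc_sub: "Xc d s t \<subseteq> bf_V d"
  unfolding Xc_def by auto

lemma Xc_mv:
  assumes d1: "1 \<le> d" and st: "length s = d" "length t = d"
  shows "mutual_visibility_set (bf_V d) (bf_E d) (Xc d s t)"
  unfolding mutual_visibility_set_def
proof (intro conjI ballI)
  show "Xc d s t \<subseteq> bf_V d" by (rule Xc_sub)
next
  fix x y assume x: "x \<in> Xc d s t" and y: "y \<in> Xc d s t"
  obtain l w where xl: "x = (l, w)" by (cases x)
  obtain l' w' where yl: "y = (l', w')" by (cases y)
  let ?Y = "Xc d (rev t) (rev s)"
  have Yb: "rv d ` ?Y = Xc d s t" using rv_Xc[of d "rev t" "rev s"] by simp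
  have tr: "X_visible (bf_V d) (bf_E d) (Xc d s t) (rv d p) (rv d q)"
    if "X_visible (bf_V d) (bf_E d) ?Y p q" "p \<in> bf_V d" "q \<in> bf_V d" for p q
    using invol.vis_f[OF rv_invol that(1) Xc_sub that(2,3)] Yb by simp
  have lw: "length w = d" "length w' = d" using x y xl yl by (auto simp: in_Xc)
  consider "l = 0" "l' = 0" | "l = 0" "l' = d" | "l = d" "l' = 0" | "l = d" "l' = d"
    using x y xl yl by (auto simp: in_Xc)
  then show "X_visible (bf_V d) (bf_E d) (Xc d s t) x y"
  proof cases
    case 1 then show ?thesis using vis00[OF d1 lw st(2)] xl yl by simp
  next
    case 2 then show ?thesis using vis0d[OF d1 lw] xl yl by simp
  next
    case 3
    have "X_visible (bf_V d) (bf_E d) ?Y (0, rev w) (d, rev w')" by (rule vis0d) (use d1 lw in auto)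
    then have "X_visible (bf_V d) (bf_E d) (Xc d s t) (rv d (0, rev w)) (rv d (d, rev w'))"
      by (rule tr) (use lw in auto)
    then show ?thesis using 3 xl yl by simp
  next
    case 4
    have "X_visible (bf_V d) (bf_E d) ?Y (0, rev w) (0, rev w')" by (rule vis00) (use d1 lw st in auto)
    then have "X_visible (bf_V d) (bf_E d) (Xc d s t) (rv d (0, rev w)) (rv d (0, rev w'))"
      by (rule tr) (use lw in auto)
    then show ?thesis using 4 xl yl by simp
  qed
qed

lemma Xc_card:
  assumes d1: "1 \<le> d" and st: "length s = d" "length t = d"
  shows "card (Xc d s t) + 2 = 2 ^ Suc d"
proof -
  let ?L = "{c::bool list. length c = d}"
  have eq: "Xc d s t = Pair (0::nat) ` (?L - {s}) \<union> Pair d ` (?L - {t})" unfolding Xc_def by auto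
  have dis: "Pair (0::nat) ` (?L - {s}) \<inter> Pair d ` (?L - {t}) = {}" using d1 by auto
  have c1: "card (Pair (0::nat) ` (?L - {s})) = 2 ^ d - 1"
    by (subst card_image) (auto simp: inj_on_def card_Diff_singleton card_words finite_words st)
  have c2: "card (Pair d ` (?L - {t})) = 2 ^ d - 1"
    by (subst card_image) (auto simp: inj_on_def card_Diff_singleton card_words finite_words st)
  have "card (Xc d s t) = card (Pair (0::nat) ` (?L - {s})) + card (Pair d ` (?L - {t}))"
  proof -
    have f1: "finite (Pair (0::nat) ` (?L - {s}))" using finite_words by simp
    have f2: "finite (Pair d ` (?L - {t}))" using finite_words by simp
    show ?thesis unfolding eq using card_Un_disjoint[OF f1 f2 dis] by simp
  qed
  then have "card (Xc d s t) = 2 * (2 ^ d - 1)" using c1 c2 by simp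
  then show ?thesis using two_pow_eq[of d] by simp
qed

theorem theorem5p4:
  fixes d :: nat
  assumes "d \<ge> 2"
  shows "mu (bf_V d) (bf_E d) = 2 ^ (d + 1) - 2"
proof -
  let ?S = "{card X | X. mutual_visibility_set (bf_V d) (bf_E d) X}"
  have fin: "finite ?S"
  proof (rule finite_subset[of _ "card ` Pow (bf_V d)"])
    show "?S \<subseteq> card ` Pow (bf_V d)" unfolding mutual_visibility_set_def by auto
    show "finite (card ` Pow (bf_V d))" using finite_bfV by simp
  qed
  define z where "z = replicate d False"
  have z: "length z = d" unfolding z_def by simp
  have d1: "1 \<le> d" using assms by simp
  show ?thesis unfolding mu_def
  proof (rule Max_eqI[OF fin])
    fix y assume "y \<in> ?S"
    then obtain X where "y = card X" "mutual_visibility_set (bf_V d) (bf_E d) X" by blast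
    then show "y \<le> 2 ^ (d + 1) - 2" using upper_bound[OF assms] by fastforce
  next
    have "card (Xc d z z) = 2 ^ (d + 1) - 2" using Xc_card[OF d1 z z] by simp
    then show "2 ^ (d + 1) - 2 \<in> ?S" using Xc_mv[OF d1 z z]
      by (intro CollectI exI[of _ "Xc d z z"] conjI) auto
  qed
qed

end
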